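(* Let $\mathcal A,\mathcal B,\mathcal C$ be Polish spaces. Let $\mu\in\wp(\mathcal A\times\mathcal B)$ and $\{\nu_n\}_{n\in\mathbb N}\subset\wp(\mathcal A\times\mathcal C)$ with $\mu^{\mathcal A}=\nu_n^{\mathcal A}$ for all $n$. If $\nu_n\to\nu$ in the weak-* topology for some $\nu\in\wp(\mathcal A\times\mathcal C)$, then $\varphi(\mu,\nu_n)\to\varphi(\mu,\nu)$ in the weak-* topology of $\wp(\mathcal A\times\mathcal B\times\mathcal C)$, where for any $\mu'\in\wp(\mathcal A\times\mathcal B)$, $\nu'\in\wp(\mathcal A\times\mathcal C)$ with $\mu'^{\mathcal A}=\nu'^{\mathcal A}$, $\varphi(\mu',\nu')$ is the probability measure with $\varphi(\mu',\nu')(A\times B\times C)=\int_{A\times C}\mu'(B\mid a)\,\nu'(da,dc)$ for all Borel $A\subset\mathcal A$, $B\subset\mathcal B$, $C\subset\mathcal C$.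
   Context: $\wp(\mathcal X)$ denotes the Borel probability measures on a Polish space $\mathcal X$; the weak-* topology is the weakest topology making $\mu\mapsto\int f\,d\mu$ continuous for all bounded continuous $f$. For $\mu\in\wp(\mathcal A\times\mathcal B)$, $\mu^{\mathcal A}$ is its marginal on $\mathcal A$ and $\mu(\cdot\mid a)$ a regular conditional distribution on $\mathcal B$ given $a$. *)

theory Defs
  imports "HOL-Probability.Probability"
begin

definition borel_prob :: "'a::topological_space measure \<Rightarrow> bool" where
  "borel_prob M \<longleftrightarrow> prob_space M \<and> sets M = sets borel"

definition weak_star_conv :: "(nat \<Rightarrow> 'a::topological_space measure) \<Rightarrow> 'a measure \<Rightarrow> bool" where
  "weak_star_conv Ms M \<longleftrightarrow>
     (\<forall>f :: 'a \<Rightarrow> real. continuous_on UNIV f \<and> bounded (range f) \<longrightarrow>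
        (\<lambda>n. integral\<^sup>L (Ms n) f) \<longlonglongrightarrow> integral\<^sup>L M f)"

definition marg1 :: "('a::topological_space \<times> 'b::topological_space) measure \<Rightarrow> 'a measure" where
  "marg1 M = distr M borel fst"

definition regular_cond_distr ::
  "('a::topological_space \<times> 'b::topological_space) measure \<Rightarrow> ('a \<Rightarrow> 'b measure) \<Rightarrow> bool" where
  "regular_cond_distr \<mu> \<kappa> \<longleftrightarrow>
     (\<forall>a. borel_prob (\<kappa> a)) \<and>
     (\<forall>B\<in>sets borel. (\<lambda>a. measure (\<kappa> a) B) \<in> borel_measurable borel) \<and>
     (\<forall>A\<in>sets borel. \<forall>B\<in>sets borel.
        measure \<mu> (A \<times> B) = (\<integral>a\<in>A. measure (\<kappa> a) B \<partial>marg1 \<mu>))"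

text \<open>phi is the gluing phi(mu, nu) built from the conditional distribution kappa of mu:
  phi(A x B x C) = integral over A x C of kappa a B with respect to nu.\<close>
definition is_glue ::
  "('a \<Rightarrow> 'b::topological_space measure) \<Rightarrow> ('a::topological_space \<times> 'c::topological_space) measure
     \<Rightarrow> ('a \<times> 'b \<times> 'c) measure \<Rightarrow> bool" where
  "is_glue \<kappa> \<nu> \<phi> \<longleftrightarrow> borel_prob \<phi> \<and>
     (\<forall>A\<in>sets borel. \<forall>B\<in>sets borel. \<forall>C\<in>sets borel.
        measure \<phi> (A \<times> B \<times> C) = (\<integral>x\<in>A \<times> C. measure (\<kappa> (fst x)) B \<partial>\<nu>))"

end

theory Submission
  imports Defs
begin

lemma bp_facts:
  assumes "borel_prob M"
  shows "prob_space M" "sets M = sets borel" "space M = UNIV"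
  using assms unfolding borel_prob_def by (auto dest: sets_eq_imp_space_eq)

lemma bp_meas:
  assumes "borel_prob M" "f \<in> measurable borel N"
  shows "f \<in> measurable M N"
proof -
  have "measurable M N = measurable borel N"
    by (rule measurable_cong_sets[OF bp_facts(2)[OF assms(1)] refl])
  then show ?thesis using assms(2) by simp
qed

lemma bp_int:
  fixes f :: "_ \<Rightarrow> real"
  assumes "borel_prob M" "f \<in> borel_measurable borel" "\<And>x. \<bar>f x\<bar> \<le> K"
  shows "integrable M f"
proof -
  interpret prob_space M using bp_facts[OF assms(1)] by simp
  show ?thesis
    by (rule integrable_const_bound[where B=K]) (use assms bp_meas in auto)
qed

lemma open_approx:
  fixes U :: "'a::metric_space set"
  assumes "open U"
  shows "\<exists>g::nat \<Rightarrow> 'a \<Rightarrow> real. (\<forall>k. continuous_on UNIV (g k)) \<and> (\<forall>k x. 0 \<le> g k x \<and> g k x \<le> indicator U x)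
     \<and> (\<forall>x. (\<lambda>k. g k x) \<longlonglongrightarrow> indicator U x)"
proof (cases "U = UNIV")
  case True
  then show ?thesis by (intro exI[of _ "\<lambda>k x. 1::real"]) auto
next
  case False
  define g where "g k x = min 1 (real k * infdist x (-U))" for k x
  have c: "continuous_on UNIV (g k)" for k
    unfolding g_def by (intro continuous_intros continuous_on_infdist)
  have cl: "closed (-U)" "-U \<noteq> {}" using assms False by auto
  have b: "0 \<le> g k x \<and> g k x \<le> indicator U x" for k x
  proof (cases "x \<in> U")
    case True then show ?thesis by (auto simp: g_def infdist_nonneg)
  next
    case False then show ?thesis by (auto simp: g_def infdist_zero)
  qed
  have l: "(\<lambda>k. g k x) \<longlonglongrightarrow> indicator U x" for x
  proof (cases "x \<in> U")
    case True
    then have d: "infdist x (-U) > 0" using infdist_pos_not_in_closed[OF cl] by auto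
    obtain N :: nat where N: "1 / infdist x (-U) < N" using reals_Archimedean2 by blast
    have "eventually (\<lambda>k. g k x = 1) sequentially"
    proof (rule eventually_sequentiallyI[of N])
      fix k assume "N \<le> k"
      then have "1 / infdist x (-U) < k" using N by linarith
      then have "1 \<le> real k * infdist x (-U)" using d by (simp add: field_simps)
      then show "g k x = 1" by (simp add: g_def)
    qed
    then show ?thesis using True by (simp add: tendsto_eventually)
  next
    case False then show ?thesis by (simp add: g_def infdist_zero)
  qed
  show ?thesis using c b l by blast
qed

definition stab :: "(nat \<Rightarrow> ('x::topological_space \<times> 'y::topological_space) measure) \<Rightarrow> ('x \<times> 'y) measure \<Rightarrow> ('x \<Rightarrow> real) \<Rightarrow> bool" where
  "stab \<rho>s \<rho> g \<longleftrightarrow> (\<forall>u::'y \<Rightarrow> real. continuous_on UNIV u \<and> bounded (range u) \<longrightarrow>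
     (\<lambda>n. \<integral>z. g (fst z) * u (snd z) \<partial>\<rho>s n) \<longlonglongrightarrow> (\<integral>z. g (fst z) * u (snd z) \<partial>\<rho>))"

lemma fst_meas[measurable]: "fst \<in> measurable (borel :: ('x::second_countable_topology \<times> 'y::second_countable_topology) measure) borel"
  by (intro borel_measurable_continuous_onI continuous_intros)

lemma snd_meas[measurable]: "snd \<in> measurable (borel :: ('x::second_countable_topology \<times> 'y::second_countable_topology) measure) borel"
  by (intro borel_measurable_continuous_onI continuous_intros)

lemma comp_fst: "g \<in> measurable borel N \<Longrightarrow> (\<lambda>z. g (fst z)) \<in> measurable (borel :: ('x::second_countable_topology \<times> 'y::second_countable_topology) measure) N"
  using measurable_compose[OF fst_meas] by blast

lemma comp_snd: "g \<in> measurable borel N \<Longrightarrow> (\<lambda>z. g (snd z)) \<in> measurable (borel :: ('x::second_countable_topology \<times> 'y::second_countable_topology) measure) N"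
  using measurable_compose[OF snd_meas] by blast

lemma marg_int_meas:
  assumes "distr N borel fst = M" "integrable M g"
  shows "g \<in> borel_measurable borel"
proof -
  have "g \<in> borel_measurable M" using assms(2) by auto
  moreover have "sets M = sets borel" using assms(1) by auto
  ultimately show ?thesis using measurable_cong_sets by blast
qed

lemma int_fst:
  fixes g :: "'x::second_countable_topology \<Rightarrow> real"
  assumes "borel_prob (N :: ('x \<times> 'y::second_countable_topology) measure)" "distr N borel fst = M" "integrable M g"
  shows "integrable N (\<lambda>z. g (fst z))"
proof -
  have gm: "g \<in> borel_measurable borel" using marg_int_meas assms by blast
  have "integrable (distr N borel fst) g" using assms by simp
  then show ?thesis
    using integrable_distr_eq[OF bp_meas[OF assms(1) fst_meas] gm] by simp
qed

lemma int_prod: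
  fixes g :: "'x::second_countable_topology \<Rightarrow> real" and u :: "'y::second_countable_topology \<Rightarrow> real"
  assumes "borel_prob (N :: ('x \<times> 'y) measure)" "distr N borel fst = M" "integrable M g"
    and "u \<in> borel_measurable borel" "\<And>y. \<bar>u y\<bar> \<le> K"
  shows "integrable N (\<lambda>z. g (fst z) * u (snd z))"
proof -
  have gm: "g \<in> borel_measurable borel" using marg_int_meas assms by blast
  have i: "integrable N (\<lambda>z. K * g (fst z))" using int_fst[OF assms(1-3)] by simp
  show ?thesis
  proof (rule Bochner_Integration.integrable_bound[OF i])
    show "(\<lambda>z. g (fst z) * u (snd z)) \<in> borel_measurable N"
      using gm assms(4) by (intro bp_meas[OF assms(1)] borel_measurable_times comp_fst comp_snd)
    have "K \<ge> 0" using assms(5)[of undefined] by linarith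
    then show "AE x in N. norm (g (fst x) * u (snd x)) \<le> norm (K * g (fst x))"
    proof (intro AE_I2)
      fix x
      have "\<bar>g (fst x)\<bar> * \<bar>u (snd x)\<bar> \<le> \<bar>g (fst x)\<bar> * K"
        using assms(5) by (intro mult_left_mono) auto
      then show "norm (g (fst x) * u (snd x)) \<le> norm (K * g (fst x))"
        using \<open>K \<ge> 0\<close> by (simp add: abs_mult mult.commute)
    qed
  qed
qed

lemma diff_est:
  fixes g g' :: "'x::second_countable_topology \<Rightarrow> real" and u :: "'y::second_countable_topology \<Rightarrow> real"
  assumes "borel_prob (N :: ('x \<times> 'y) measure)" "distr N borel fst = M" "integrable M g" "integrable M g'"
    and "u \<in> borel_measurable borel" "\<And>y. \<bar>u y\<bar> \<le> K"
  shows "\<bar>(\<integral>z. g (fst z) * u (snd z) \<partial>N) - (\<integral>z. g' (fst z) * u (snd z) \<partial>N)\<bar> \<le> K * (\<integral>x. \<bar>g x - g' x\<bar> \<partial>M)"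
proof -
  have gm: "g \<in> borel_measurable borel" "g' \<in> borel_measurable borel" using marg_int_meas assms by blast+
  have d: "integrable M (\<lambda>x. g x - g' x)" using assms by auto
  have i1: "integrable N (\<lambda>z. g (fst z) * u (snd z))" "integrable N (\<lambda>z. g' (fst z) * u (snd z))"
    using int_prod assms by blast+
  have i2: "integrable N (\<lambda>z. \<bar>g (fst z) - g' (fst z)\<bar> * K)"
    using int_fst[OF assms(1,2) integrable_abs[OF d]] by simp
  have "(\<integral>z. g (fst z) * u (snd z) \<partial>N) - (\<integral>z. g' (fst z) * u (snd z) \<partial>N) = (\<integral>z. (g (fst z) - g' (fst z)) * u (snd z) \<partial>N)"
    using i1 by (simp add: left_diff_distrib)
  also have "\<bar>\<dots>\<bar> \<le> (\<integral>z. \<bar>(g (fst z) - g' (fst z)) * u (snd z)\<bar> \<partial>N)"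
    by (rule integral_abs_bound)
  also have "\<dots> \<le> (\<integral>z. \<bar>g (fst z) - g' (fst z)\<bar> * K \<partial>N)"
  proof (rule integral_mono[OF _ i2])
    show "integrable N (\<lambda>z. \<bar>(g (fst z) - g' (fst z)) * u (snd z)\<bar>)"
      using i1 by (auto simp: left_diff_distrib)
    show "\<bar>(g (fst z) - g' (fst z)) * u (snd z)\<bar> \<le> \<bar>g (fst z) - g' (fst z)\<bar> * K" for z
      using assms(6) by (simp add: abs_mult mult_left_mono)
  qed
  also have "\<dots> = K * (\<integral>z. \<bar>g (fst z) - g' (fst z)\<bar> \<partial>N)" by simp
  also have "(\<integral>z. \<bar>g (fst z) - g' (fst z)\<bar> \<partial>N) = (\<integral>x. \<bar>g x - g' x\<bar> \<partial>distr N borel fst)"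
    using gm by (subst integral_distr) (auto intro!: bp_meas[OF assms(1)])
  finally show ?thesis using assms(2) by simp
qed

locale fixm =
  fixes \<rho>s :: "nat \<Rightarrow> ('x::polish_space \<times> 'y::polish_space) measure" and \<rho> :: "('x \<times> 'y) measure"
    and M :: "'x measure"
  assumes bps: "\<And>n. borel_prob (\<rho>s n)" and bp: "borel_prob \<rho>"
    and ms: "\<And>n. distr (\<rho>s n) borel fst = M" and m: "distr \<rho> borel fst = M"
begin

lemma M_prob: "prob_space M"
  using prob_space.prob_space_distr[OF bp_facts(1)[OF bp] bp_meas[OF bp fst_meas]] m by simp

lemma M_sets: "sets M = sets borel"
  by (subst m[symmetric]) simp

lemma M_space: "space M = UNIV"
  by (subst m[symmetric]) simp

lemma M_int: "(g::'x\<Rightarrow>real) \<in> borel_measurable borel \<Longrightarrow> (\<And>x. \<bar>g x\<bar> \<le> K) \<Longrightarrow> integrable M g"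
  by (rule bp_int[of M g K]) (auto simp: M_prob M_sets borel_prob_def)

lemma M_int_ind: "A \<in> sets borel \<Longrightarrow> integrable M (indicator A :: _ \<Rightarrow> real)"
  by (rule M_int[where K=1]) (auto split: split_indicator)

lemma bounded_abs: "bounded (range (u::'a \<Rightarrow> real)) \<Longrightarrow> \<exists>K>0. \<forall>y. \<bar>u y\<bar> \<le> K"
  unfolding bounded_pos by auto

lemma tri3: "\<bar>a - a'\<bar> < e/3 \<Longrightarrow> \<bar>a' - b'\<bar> < e/3 \<Longrightarrow> \<bar>b - b'\<bar> < e/3 \<Longrightarrow> \<bar>a - (b::real)\<bar> < e"
  unfolding abs_less_iff by linarith

lemma CL:
  assumes g: "integrable M g"
    and app: "\<And>e. e > 0 \<Longrightarrow> \<exists>g'. integrable M g' \<and> stab \<rho>s \<rho> g' \<and> (\<integral>x. \<bar>g x - g' x\<bar> \<partial>M) < e"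
  shows "stab \<rho>s \<rho> g"
  unfolding stab_def
proof (intro allI impI)
  fix u :: "'y \<Rightarrow> real" assume u: "continuous_on UNIV u \<and> bounded (range u)"
  then obtain K where K: "K > 0" "\<And>y. \<bar>u y\<bar> \<le> K"
    using bounded_abs by blast
  have um: "u \<in> borel_measurable borel" using u borel_measurable_continuous_onI by blast
  show "(\<lambda>n. \<integral>z. g (fst z) * u (snd z) \<partial>\<rho>s n) \<longlonglongrightarrow> (\<integral>z. g (fst z) * u (snd z) \<partial>\<rho>)"
    unfolding tendsto_iff
  proof (intro allI impI)
    fix e :: real assume e: "e > 0"
    obtain g' where g': "integrable M g'" "stab \<rho>s \<rho> g'" "(\<integral>x. \<bar>g x - g' x\<bar> \<partial>M) < e / (3 * K)"
      using app[of "e / (3 * K)"] e K by auto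
    have lim: "(\<lambda>n. \<integral>z. g' (fst z) * u (snd z) \<partial>\<rho>s n) \<longlonglongrightarrow> (\<integral>z. g' (fst z) * u (snd z) \<partial>\<rho>)"
      using g'(2) u unfolding stab_def by blast
    have ev: "eventually (\<lambda>n. dist (\<integral>z. g' (fst z) * u (snd z) \<partial>\<rho>s n) (\<integral>z. g' (fst z) * u (snd z) \<partial>\<rho>) < e/3) sequentially"
      using lim[unfolded tendsto_iff, rule_format, of "e/3"] e by simp
    have kb: "K * (\<integral>x. \<bar>g x - g' x\<bar> \<partial>M) < e / 3"
      using g'(3) K(1) by (simp add: field_simps)
    have d1: "\<bar>(\<integral>z. g (fst z) * u (snd z) \<partial>\<rho>s n) - (\<integral>z. g' (fst z) * u (snd z) \<partial>\<rho>s n)\<bar> < e/3" for n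
      using diff_est[OF bps[of n] ms[of n] g g'(1) um K(2)] kb by linarith
    have d2: "\<bar>(\<integral>z. g (fst z) * u (snd z) \<partial>\<rho>) - (\<integral>z. g' (fst z) * u (snd z) \<partial>\<rho>)\<bar> < e/3"
      using diff_est[OF bp m g g'(1) um K(2)] kb by linarith
    show "eventually (\<lambda>n. dist (\<integral>z. g (fst z) * u (snd z) \<partial>\<rho>s n) (\<integral>z. g (fst z) * u (snd z) \<partial>\<rho>) < e) sequentially"
      using ev
    proof eventually_elim
      case (elim n)
      then show ?case using tri3[OF d1[of n] _ d2] unfolding dist_real_def by blast
    qed
  qed
qed

lemma stab_add:
  assumes "stab \<rho>s \<rho> g" "stab \<rho>s \<rho> h" "integrable M g" "integrable M h"
  shows "stab \<rho>s \<rho> (\<lambda>x. g x + h x)"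
  unfolding stab_def
proof (intro allI impI)
  fix u :: "'y \<Rightarrow> real" assume u: "continuous_on UNIV u \<and> bounded (range u)"
  then obtain K where K: "\<And>y. \<bar>u y\<bar> \<le> K"
    using bounded_abs by blast
  have um: "u \<in> borel_measurable borel" using u borel_measurable_continuous_onI by blast
  have eq: "(\<integral>z. (g (fst z) + h (fst z)) * u (snd z) \<partial>N) = (\<integral>z. g (fst z) * u (snd z) \<partial>N) + (\<integral>z. h (fst z) * u (snd z) \<partial>N)"
    if "borel_prob N" "distr N borel fst = M" for N
    using int_prod[OF that assms(3) um K] int_prod[OF that assms(4) um K]
    by (simp add: distrib_right)
  show "(\<lambda>n. \<integral>z. (g (fst z) + h (fst z)) * u (snd z) \<partial>\<rho>s n) \<longlonglongrightarrow> (\<integral>z. (g (fst z) + h (fst z)) * u (snd z) \<partial>\<rho>)"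
    unfolding eq[OF bps ms] eq[OF bp m]
    using assms(1,2) u unfolding stab_def by (intro tendsto_add) auto
qed

lemma stab_cmult:
  assumes "stab \<rho>s \<rho> g"
  shows "stab \<rho>s \<rho> (\<lambda>x. c * g x)"
  using assms unfolding stab_def
  by (auto simp: mult.assoc intro!: tendsto_mult_left)

lemma stab_zero: "stab \<rho>s \<rho> (\<lambda>x. 0)"
  unfolding stab_def by simp

lemma stab_sum:
  assumes "finite I" "\<And>i. i \<in> I \<Longrightarrow> stab \<rho>s \<rho> (f i)" "\<And>i. i \<in> I \<Longrightarrow> integrable M (f i)"
  shows "stab \<rho>s \<rho> (\<lambda>x. \<Sum>i\<in>I. f i x)"
  using assms
proof (induction I rule: finite_induct)
  case empty
  then show ?case using stab_zero by simp
next
  case (insert i I)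
  have "stab \<rho>s \<rho> (\<lambda>x. f i x + (\<Sum>i\<in>I. f i x))"
    using insert by (intro stab_add) auto
  then show ?case using insert by simp
qed

lemma stab_cont:
  assumes "weak_star_conv \<rho>s \<rho>" "continuous_on UNIV g" "bounded (range g)"
  shows "stab \<rho>s \<rho> g"
  unfolding stab_def
proof (intro allI impI)
  fix u :: "'y \<Rightarrow> real" assume u: "continuous_on UNIV u \<and> bounded (range u)"
  obtain K1 where K1: "\<And>x. \<bar>g x\<bar> \<le> K1" using assms(3) bounded_abs by blast
  obtain K2 where K2: "\<And>y. \<bar>u y\<bar> \<le> K2" using u bounded_abs by blast
  have c: "continuous_on UNIV (\<lambda>z. g (fst z) * u (snd z))"
  proof -
    have "continuous_on UNIV (\<lambda>z::'x\<times>'y. g (fst z))"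
      by (rule continuous_on_compose2[OF assms(2) continuous_on_fst[OF continuous_on_id]]) auto
    moreover have "continuous_on UNIV (\<lambda>z::'x\<times>'y. u (snd z))"
      using u by (intro continuous_on_compose2[OF _ continuous_on_snd[OF continuous_on_id]]) auto
    ultimately show ?thesis by (rule continuous_on_mult)
  qed
  have "\<bar>g (fst z) * u (snd z)\<bar> \<le> K1 * K2" for z
    unfolding abs_mult by (intro mult_mono K1 K2) (use K1[of undefined] in auto)
  then have b: "bounded (range (\<lambda>z. g (fst z) * u (snd z)))"
    by (intro boundedI[where B="K1*K2"]) auto
  show "(\<lambda>n. \<integral>z. g (fst z) * u (snd z) \<partial>\<rho>s n) \<longlonglongrightarrow> (\<integral>z. g (fst z) * u (snd z) \<partial>\<rho>)"
    using assms(1)[unfolded weak_star_conv_def, rule_format, OF conjI[OF c b]] .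
qed

end

context fixm begin

lemma ind_int_diff:
  assumes "A \<in> sets borel" "B \<in> sets borel" "B \<subseteq> A"
  shows "(\<integral>x. \<bar>indicator A x - indicator B x\<bar> \<partial>M) = measure M A - measure M B"
proof -
  interpret prob_space M by (rule M_prob)
  have "(\<lambda>x. \<bar>indicator A x - indicator B x\<bar> :: real) = indicator (A - B)"
    using assms(3) by (intro ext) (auto split: split_indicator)
  then have "(\<integral>x. \<bar>indicator A x - indicator B x\<bar> \<partial>M) = measure M (A - B)"
    using M_space by simp
  also have "\<dots> = measure M A - measure M B"
    using assms M_sets by (intro finite_measure_Diff) auto
  finally show ?thesis .
qed

lemma stab_sets:
  assumes G: "Int_stable G" "sets (borel::'x measure) = sigma_sets UNIV G" "UNIV \<in> G"
    "\<And>E. E \<in> G \<Longrightarrow> stab \<rho>s \<rho> (indicator E)"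
    and E: "E \<in> sets borel"
  shows "stab \<rho>s \<rho> (indicator E)"
proof -
  interpret prob_space M by (rule M_prob)
  have cl: "G \<subseteq> Pow UNIV" by auto
  have E': "E \<in> sigma_sets UNIV G" using E G(2) by simp
  show ?thesis using G(1) cl E'
  proof (induct rule: sigma_sets_induct_disjoint)
    case (basic A)
    then show ?case using G(4) by simp
  next
    case empty
    then show ?case using stab_zero by simp
  next
    case (compl A)
    have A: "A \<in> sets borel" using compl(1) G(2) by simp
    have "stab \<rho>s \<rho> (\<lambda>x. indicator UNIV x + (- 1) * indicator A x)"
    proof -
      have u1: "stab \<rho>s \<rho> (\<lambda>x. 1)" using G(4)[OF G(3)] by simp
      show ?thesis using u1 compl(2) A M_int_ind M_int_ind[of UNIV] by (intro stab_add stab_cmult) auto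
    qed
    moreover have "(\<lambda>x. indicator UNIV x + (- 1) * indicator A x :: real) = indicator (UNIV - A)"
      by (intro ext) (auto split: split_indicator)
    ultimately show ?case by simp
  next
    case (union A)
    have A: "A i \<in> sets borel" for i using union(2) G(2) by auto
    define B where "B N = (\<Union>i<N. A i)" for N
    have B: "B N \<in> sets borel" for N unfolding B_def using A by auto
    have U: "(\<Union>i. A i) \<in> sets borel" using A by auto
    have BU: "B N \<subseteq> (\<Union>i. A i)" for N unfolding B_def by auto
    have inc: "incseq B" unfolding B_def by (intro monoI) (force simp: lessThan_def)
    have UB: "(\<Union>N. B N) = (\<Union>i. A i)" unfolding B_def by auto
    have lim: "(\<lambda>N. measure M (B N)) \<longlonglongrightarrow> measure M (\<Union>i. A i)"
      using finite_Lim_measure_incseq[of B] B inc UB M_sets by auto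
    have stB: "stab \<rho>s \<rho> (indicator (B N))" for N
    proof -
      have "indicator (B N) = (\<lambda>x. \<Sum>i\<in>{..<N}. indicator (A i) x :: real)"
        unfolding B_def
        using indicator_UN_disjoint[of "{..<N}" A] union(1)
        by (auto simp: disjoint_family_on_def disjoint_family_on_mono)
      moreover have "stab \<rho>s \<rho> (\<lambda>x. \<Sum>i\<in>{..<N}. indicator (A i) x)"
        using union(3) A M_int_ind by (intro stab_sum) auto
      ultimately show ?thesis by simp
    qed
    show ?case
    proof (rule CL[OF M_int_ind[OF U]])
      fix e :: real assume e: "e > 0"
      then obtain N where N: "dist (measure M (B N)) (measure M (\<Union>i. A i)) < e"
        using lim[unfolded tendsto_iff, rule_format, of e] by (auto simp: eventually_sequentially)
      show "\<exists>g'. integrable M g' \<and> stab \<rho>s \<rho> g' \<and> (\<integral>x. \<bar>indicator (\<Union>i. A i) x - g' x\<bar> \<partial>M) < e"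
      proof (intro exI[of _ "indicator (B N) :: 'x \<Rightarrow> real"] conjI)
        show "integrable M (indicator (B N) :: 'x \<Rightarrow> real)" using M_int_ind B by simp
        show "stab \<rho>s \<rho> (indicator (B N))" by (rule stB)
        show "(\<integral>x. \<bar>indicator (\<Union>i. A i) x - indicator (B N) x\<bar> \<partial>M) < e"
          using ind_int_diff[OF U B BU] N by (simp add: dist_real_def)
      qed
    qed
  qed
qed

end

context fixm begin

lemma M_meas: "f \<in> measurable borel N \<Longrightarrow> f \<in> measurable M N"
proof -
  have "measurable M N = measurable borel N" by (rule measurable_cong_sets[OF M_sets refl])
  then show "f \<in> measurable borel N \<Longrightarrow> f \<in> measurable M N" by simp
qed

lemma stab_open:
  assumes w: "weak_star_conv \<rho>s \<rho>" and U: "open U"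
  shows "stab \<rho>s \<rho> (indicator U)"
proof -
  interpret prob_space M by (rule M_prob)
  obtain g :: "nat \<Rightarrow> 'x \<Rightarrow> real" where g: "\<And>k. continuous_on UNIV (g k)"
    "\<And>k x. 0 \<le> g k x \<and> g k x \<le> indicator U x" "\<And>x. (\<lambda>k. g k x) \<longlonglongrightarrow> indicator U x"
    using open_approx[OF U] by blast
  have gm: "g k \<in> borel_measurable M" for k
    using g(1) by (intro M_meas borel_measurable_continuous_onI)
  have Um: "indicator U \<in> borel_measurable M" using U by (intro M_meas) auto
  have gb: "\<bar>g k x\<bar> \<le> 1" for k x
  proof -
    have "indicator U x \<le> (1::real)" by (simp split: split_indicator)
    then show ?thesis using g(2)[of k x] by linarith
  qed
  have lim: "(\<lambda>k. \<integral>x. \<bar>indicator U x - g k x\<bar> \<partial>M) \<longlonglongrightarrow> (\<integral>x. 0 \<partial>M)"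
  proof (rule integral_dominated_convergence[where w="\<lambda>x. 1"])
    show "(\<lambda>x. 0::real) \<in> borel_measurable M" by simp
    show "(\<lambda>x. \<bar>indicator U x - g k x\<bar>) \<in> borel_measurable M" for k
      using gm Um by measurable
    show "integrable M (\<lambda>x. 1::real)" by simp
    show "AE x in M. (\<lambda>k. \<bar>indicator U x - g k x\<bar>) \<longlonglongrightarrow> 0"
    proof (intro AE_I2)
      fix x
      have "(\<lambda>k. indicator U x - g k x) \<longlonglongrightarrow> indicator U x - indicator U x"
        by (intro tendsto_intros g(3))
      then have "(\<lambda>k. \<bar>indicator U x - g k x\<bar>) \<longlonglongrightarrow> \<bar>indicator U x - indicator U x\<bar>"
        by (rule tendsto_rabs)
      then show "(\<lambda>k. \<bar>indicator U x - g k x\<bar>) \<longlonglongrightarrow> (0::real)" by simp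
    qed
    show "AE x in M. norm \<bar>indicator U x - g k x\<bar> \<le> 1" for k
    proof (intro AE_I2)
      fix x
      have "indicator U x \<le> (1::real)" "indicator U x \<ge> (0::real)" by (simp_all split: split_indicator)
      then show "norm \<bar>indicator U x - g k x\<bar> \<le> 1" using g(2)[of k x]
        unfolding real_norm_def abs_abs abs_le_iff by linarith
    qed
  qed
  show ?thesis
  proof (rule CL)
    show "integrable M (indicator U :: 'x \<Rightarrow> real)" using U M_int_ind by auto
    fix e :: real assume e: "e > 0"
    then obtain k where k: "dist (\<integral>x. \<bar>indicator U x - g k x\<bar> \<partial>M) 0 < e"
      using lim[unfolded tendsto_iff, rule_format, of e] by (auto simp: eventually_sequentially)
    show "\<exists>g'. integrable M g' \<and> stab \<rho>s \<rho> g' \<and> (\<integral>x. \<bar>indicator U x - g' x\<bar> \<partial>M) < e"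
    proof (intro exI[of _ "g k"] conjI)
      show "integrable M (g k)" using gb g(1) by (intro M_int[where K=1] borel_measurable_continuous_onI)
      show "stab \<rho>s \<rho> (g k)"
        using gb by (intro stab_cont[OF w g(1)] boundedI[where B=1]) auto
      show "(\<integral>x. \<bar>indicator U x - g k x\<bar> \<partial>M) < e" using k by (simp add: dist_real_def)
    qed
  qed
qed

lemma stab_int:
  assumes S: "\<And>E. E \<in> sets borel \<Longrightarrow> stab \<rho>s \<rho> (indicator E)" and f: "integrable M f"
  shows "stab \<rho>s \<rho> f"
  using f
proof (induct rule: integrable_induct)
  case (base A c)
  have "stab \<rho>s \<rho> (\<lambda>x. c * indicator A x)"
    using base S M_sets by (intro stab_cmult) auto
  then show ?case by (simp add: mult.commute)
next
  case (add f g)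
  then show ?case by (intro stab_add)
next
  case (lim f s)
  have lim0: "(\<lambda>i. \<integral>x. \<bar>f x - s i x\<bar> \<partial>M) \<longlonglongrightarrow> (\<integral>x. 0 \<partial>M)"
  proof (rule integral_dominated_convergence[where w="\<lambda>x. 3 * \<bar>f x\<bar>"])
    show "(\<lambda>x. 0::real) \<in> borel_measurable M" by simp
    show "(\<lambda>x. \<bar>f x - s i x\<bar>) \<in> borel_measurable M" for i
      using lim(1)[of i] lim(5) by measurable
    show "integrable M (\<lambda>x. 3 * \<bar>f x\<bar>)" using lim(5) by auto
    show "AE x in M. (\<lambda>i. \<bar>f x - s i x\<bar>) \<longlonglongrightarrow> 0"
    proof (intro AE_I2)
      fix x assume x: "x \<in> space M"
      have "(\<lambda>i. f x - s i x) \<longlonglongrightarrow> f x - f x"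
        by (intro tendsto_intros lim(3)[OF x])
      then have "(\<lambda>i. \<bar>f x - s i x\<bar>) \<longlonglongrightarrow> \<bar>f x - f x\<bar>"
        by (rule tendsto_rabs)
      then show "(\<lambda>i. \<bar>f x - s i x\<bar>) \<longlonglongrightarrow> (0::real)" by simp
    qed
    show "AE x in M. norm \<bar>f x - s i x\<bar> \<le> 3 * \<bar>f x\<bar>" for i
      using lim(4)[of _ i] by (intro AE_I2) (fastforce)
  qed
  show ?case
  proof (rule CL[OF lim(5)])
    fix e :: real assume e: "e > 0"
    then obtain i where i: "dist (\<integral>x. \<bar>f x - s i x\<bar> \<partial>M) 0 < e"
      using lim0[unfolded tendsto_iff, rule_format, of e] by (auto simp: eventually_sequentially)
    show "\<exists>g'. integrable M g' \<and> stab \<rho>s \<rho> g' \<and> (\<integral>x. \<bar>f x - g' x\<bar> \<partial>M) < e"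
      using lim(1,2) i by (intro exI[of _ "s i"]) (simp add: dist_real_def)
  qed
qed

end

definition lb :: "(nat \<Rightarrow> 'z measure) \<Rightarrow> 'z measure \<Rightarrow> ('z \<Rightarrow> real) \<Rightarrow> bool" where
  "lb \<rho>s \<rho> f \<longleftrightarrow> (\<forall>n. integrable (\<rho>s n) f) \<and> integrable \<rho> f \<and>
     (\<forall>e>0. eventually (\<lambda>n. (\<integral>z. f z \<partial>\<rho>s n) > (\<integral>z. f z \<partial>\<rho>) - e) sequentially)"

lemma lb_add:
  assumes "lb \<rho>s \<rho> f" "lb \<rho>s \<rho> g"
  shows "lb \<rho>s \<rho> (\<lambda>z. f z + g z)"
  unfolding lb_def
proof (intro conjI allI impI)
  show "integrable (\<rho>s n) (\<lambda>z. f z + g z)" for n using assms unfolding lb_def by auto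
  show "integrable \<rho> (\<lambda>z. f z + g z)" using assms unfolding lb_def by auto
  fix e :: real assume e: "e > 0"
  have "eventually (\<lambda>n. (\<integral>z. f z \<partial>\<rho>s n) > (\<integral>z. f z \<partial>\<rho>) - e/2) sequentially"
    "eventually (\<lambda>n. (\<integral>z. g z \<partial>\<rho>s n) > (\<integral>z. g z \<partial>\<rho>) - e/2) sequentially"
    using assms e unfolding lb_def by auto
  then show "eventually (\<lambda>n. (\<integral>z. f z + g z \<partial>\<rho>s n) > (\<integral>z. f z + g z \<partial>\<rho>) - e) sequentially"
  proof eventually_elim
    case (elim n)
    then show ?case using assms unfolding lb_def by simp
  qed
qed

lemma lb_cmult:
  assumes "lb \<rho>s \<rho> f" "c \<ge> 0"
  shows "lb \<rho>s \<rho> (\<lambda>z. c * f z)"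
proof (cases "c = 0")
  case True
  then show ?thesis unfolding lb_def by simp
next
  case False
  then have c: "c > 0" using assms by simp
  show ?thesis
    unfolding lb_def
  proof (intro conjI allI impI)
    show "integrable (\<rho>s n) (\<lambda>z. c * f z)" for n using assms unfolding lb_def by auto
    show "integrable \<rho> (\<lambda>z. c * f z)" using assms unfolding lb_def by auto
    fix e :: real assume e: "e > 0"
    have "eventually (\<lambda>n. (\<integral>z. f z \<partial>\<rho>s n) > (\<integral>z. f z \<partial>\<rho>) - e/c) sequentially"
      using assms e c unfolding lb_def by auto
    then show "eventually (\<lambda>n. (\<integral>z. c * f z \<partial>\<rho>s n) > (\<integral>z. c * f z \<partial>\<rho>) - e) sequentially"
    proof eventually_elim
      case (elim n)
      then have "c * (\<integral>z. f z \<partial>\<rho>s n) > c * ((\<integral>z. f z \<partial>\<rho>) - e/c)"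
        using c by (intro mult_strict_left_mono) auto
      then show ?case using c by (simp add: right_diff_distrib)
    qed
  qed
qed

lemma lb_zero: "lb \<rho>s \<rho> (\<lambda>z. 0)"
  unfolding lb_def by simp

lemma lb_sum:
  assumes "finite I" "\<And>i. i \<in> I \<Longrightarrow> lb \<rho>s \<rho> (f i)"
  shows "lb \<rho>s \<rho> (\<lambda>z. \<Sum>i\<in>I. f i z)"
  using assms
proof (induction I rule: finite_induct)
  case empty
  then show ?case using lb_zero by simp
next
  case (insert i I)
  have "lb \<rho>s \<rho> (\<lambda>z. f i z + (\<Sum>i\<in>I. f i z))"
    using insert by (intro lb_add) auto
  then show ?case using insert by simp
qed

lemma lb_box:
  fixes \<rho>s :: "nat \<Rightarrow> ('x::polish_space \<times> 'y::polish_space) measure"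
  assumes bps: "\<And>n. borel_prob (\<rho>s n)" and bp: "borel_prob \<rho>"
    and st: "stab \<rho>s \<rho> (indicator E)" and E: "E \<in> sets borel" and Op: "open Op"
  shows "lb \<rho>s \<rho> (\<lambda>z. indicator E (fst z) * indicator Op (snd z))"
proof -
  obtain g :: "nat \<Rightarrow> 'y \<Rightarrow> real" where g: "\<And>k. continuous_on UNIV (g k)"
    "\<And>k x. 0 \<le> g k x \<and> g k x \<le> indicator Op x" "\<And>x. (\<lambda>k. g k x) \<longlonglongrightarrow> indicator Op x"
    using open_approx[OF Op] by blast
  have gm: "g k \<in> borel_measurable borel" for k using g(1) by (rule borel_measurable_continuous_onI)
  have gb: "\<bar>g k x\<bar> \<le> 1" for k x
  proof -
    have "indicator Op x \<le> (1::real)" by (simp split: split_indicator)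
    then show ?thesis using g(2)[of k x] by linarith
  qed
  have Em: "(\<lambda>z::'x\<times>'y. indicator E (fst z) :: real) \<in> borel_measurable borel"
    using E by (intro comp_fst) auto
  have Om: "(\<lambda>z::'x\<times>'y. indicator Op (snd z) :: real) \<in> borel_measurable borel"
    using Op by (intro comp_snd) auto
  have hm: "(\<lambda>z::'x\<times>'y. indicator E (fst z) * g k (snd z)) \<in> borel_measurable borel" for k
    using Em comp_snd[OF gm[of k]] by (rule borel_measurable_times)
  have fm: "(\<lambda>z::'x\<times>'y. indicator E (fst z) * indicator Op (snd z) :: real) \<in> borel_measurable borel"
    using Em Om by (rule borel_measurable_times)
  have ib: "\<bar>indicator S x :: real\<bar> \<le> 1" for S x by (simp split: split_indicator)
  have hb: "\<bar>indicator E (fst z) * g k (snd z)\<bar> \<le> 1" for k z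
    unfolding abs_mult by (intro mult_le_one ib gb abs_ge_zero)
  have fb: "\<bar>indicator E (fst z) * indicator Op (snd z) :: real\<bar> \<le> 1" for z
    unfolding abs_mult by (intro mult_le_one ib abs_ge_zero)
  have ifn: "integrable N (\<lambda>z. indicator E (fst z) * indicator Op (snd z) :: real)" if "borel_prob N" for N
    using bp_int[OF that fm fb] .
  have ihn: "integrable N (\<lambda>z. indicator E (fst z) * g k (snd z))" if "borel_prob N" for N k
    using bp_int[OF that hm hb] .
  have mono: "(\<integral>z. indicator E (fst z) * g k (snd z) \<partial>N) \<le> (\<integral>z. indicator E (fst z) * indicator Op (snd z) \<partial>N)"
    if "borel_prob N" for N k
    using ihn[OF that] ifn[OF that]
  proof (rule integral_mono)
    fix z
    show "indicator E (fst z) * g k (snd z) \<le> indicator E (fst z) * indicator Op (snd z)"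
      using g(2)[of k "snd z"] by (intro mult_left_mono) auto
  qed
  have lim: "(\<lambda>k. \<integral>z. indicator E (fst z) * g k (snd z) \<partial>\<rho>) \<longlonglongrightarrow> (\<integral>z. indicator E (fst z) * indicator Op (snd z) \<partial>\<rho>)"
  proof (rule integral_dominated_convergence[where w="\<lambda>x. 1"])
    show "(\<lambda>z. indicator E (fst z) * indicator Op (snd z) :: real) \<in> borel_measurable \<rho>"
      using fm by (rule bp_meas[OF bp])
    show "(\<lambda>z. indicator E (fst z) * g k (snd z)) \<in> borel_measurable \<rho>" for k
      using hm by (rule bp_meas[OF bp])
    show "integrable \<rho> (\<lambda>x. 1::real)"
      by (rule bp_int[OF bp, where K=1]) auto
    show "AE z in \<rho>. (\<lambda>k. indicator E (fst z) * g k (snd z)) \<longlonglongrightarrow> indicator E (fst z) * indicator Op (snd z)"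
      by (intro AE_I2 tendsto_intros g(3))
    show "AE z in \<rho>. norm (indicator E (fst z) * g k (snd z)) \<le> 1" for k
      using hb by auto
  qed
  show ?thesis
    unfolding lb_def
  proof (intro conjI allI impI)
    show "integrable (\<rho>s n) (\<lambda>z. indicator E (fst z) * indicator Op (snd z) :: real)" for n using ifn[OF bps[of n]] .
    show "integrable \<rho> (\<lambda>z. indicator E (fst z) * indicator Op (snd z) :: real)" using ifn[OF bp] .
    fix e :: real assume e: "e > 0"
    obtain k where k: "dist (\<integral>z. indicator E (fst z) * g k (snd z) \<partial>\<rho>) (\<integral>z. indicator E (fst z) * indicator Op (snd z) \<partial>\<rho>) < e/2"
      using lim[unfolded tendsto_iff, rule_format, of "e/2"] e by (auto simp: eventually_sequentially)
    have bg: "bounded (range (g k))" using gb by (intro boundedI[where B=1]) auto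
    have l2: "(\<lambda>n. \<integral>z. indicator E (fst z) * g k (snd z) \<partial>\<rho>s n) \<longlonglongrightarrow> (\<integral>z. indicator E (fst z) * g k (snd z) \<partial>\<rho>)"
      using st[unfolded stab_def, rule_format, OF conjI[OF g(1) bg]] .
    have ev: "eventually (\<lambda>n. dist (\<integral>z. indicator E (fst z) * g k (snd z) \<partial>\<rho>s n) (\<integral>z. indicator E (fst z) * g k (snd z) \<partial>\<rho>) < e/2) sequentially"
      using l2[unfolded tendsto_iff, rule_format, of "e/2"] e by simp
    then show "eventually (\<lambda>n. (\<integral>z. indicator E (fst z) * indicator Op (snd z) \<partial>\<rho>s n) > (\<integral>z. indicator E (fst z) * indicator Op (snd z) \<partial>\<rho>) - e) sequentially"
    proof eventually_elim
      case (elim n)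
      then show ?case using k mono[OF bps[of n], of k] unfolding dist_real_def abs_less_iff by linarith
    qed
  qed
qed

lemma int_ind: assumes "borel_prob N" shows "(\<integral>x. indicator S x \<partial>N) = measure N S"
  using bp_facts(3)[OF assms] by (simp add: integral_indicator)

lemma bp_meas1: "borel_prob N \<Longrightarrow> measure N UNIV = 1"
  using bp_facts[of N] prob_space.prob_space by metis

lemma int_const_bp: "borel_prob N \<Longrightarrow> (\<integral>x. c \<partial>N) = (c::real)"
  using bp_meas1[of N] bp_facts(3)[of N] by simp

lemma lb_union:
  fixes \<rho>s :: "nat \<Rightarrow> ('x::polish_space \<times> 'y::polish_space) measure" and N :: nat
  assumes bps: "\<And>n. borel_prob (\<rho>s n)" and bp: "borel_prob \<rho>"
    and st: "\<And>E. E \<in> sets borel \<Longrightarrow> stab \<rho>s \<rho> (indicator E)"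
    and V: "\<And>i. open (V i)" and Q: "\<And>i. open (Q i)"
  shows "lb \<rho>s \<rho> (indicator (\<Union>i<N. V i \<times> Q i))"
proof -
  define EJ where "EJ J = {x. \<forall>i<N. (x \<in> V i) = (i \<in> J)}" for J
  define QJ where "QJ J = (\<Union>i\<in>J. Q i)" for J
  have EJm: "EJ J \<in> sets borel" for J
  proof -
    have "EJ J = UNIV - (\<Union>i\<in>{..<N}. (if i \<in> J then - V i else V i))"
      unfolding EJ_def by auto
    also have "\<dots> \<in> sets borel"
      using V by (intro sets.Diff sets.finite_UN) (auto intro: borel_open borel_closed simp: finite_lessThan)
    finally show ?thesis .
  qed
  have QJo: "open (QJ J)" for J unfolding QJ_def using Q by auto
  have ident: "indicator (\<Union>i<N. V i \<times> Q i) z = (\<Sum>J\<in>Pow {..<N}. indicator (EJ J) (fst z) * indicator (QJ J) (snd z) :: real)" for z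
  proof -
    obtain x c where z: "z = (x, c)" by (cases z)
    define J0 where "J0 = {i. i < N \<and> x \<in> V i}"
    have J0: "J0 \<in> Pow {..<N}" unfolding J0_def by auto
    have e: "indicator (EJ J) x = (if J = J0 then 1 else 0 :: real)" if "J \<in> Pow {..<N}" for J
    proof -
      have "x \<in> EJ J \<longleftrightarrow> J = J0"
        using that unfolding EJ_def J0_def by auto
      then show ?thesis unfolding indicator_def by auto
    qed
    have "(\<Sum>J\<in>Pow {..<N}. indicator (EJ J) x * indicator (QJ J) c :: real) = (\<Sum>J\<in>Pow {..<N}. if J = J0 then indicator (QJ J0) c else 0)"
      by (intro sum.cong) (auto simp: e)
    also have "\<dots> = indicator (QJ J0) c" using J0 by simp
    also have "\<dots> = indicator (\<Union>i<N. V i \<times> Q i) (x, c)"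
      unfolding QJ_def J0_def by (auto split: split_indicator)
    finally show ?thesis using z by simp
  qed
  have "lb \<rho>s \<rho> (\<lambda>z. \<Sum>J\<in>Pow {..<N}. indicator (EJ J) (fst z) * indicator (QJ J) (snd z))"
    by (intro lb_sum lb_box[OF bps bp st[OF EJm] EJm QJo]) auto
  moreover have "indicator (\<Union>i<N. V i \<times> Q i) = (\<lambda>z. \<Sum>J\<in>Pow {..<N}. indicator (EJ J) (fst z) * indicator (QJ J) (snd z) :: real)"
    using ident by (intro ext) simp
  ultimately show ?thesis by simp
qed

lemma lb_open:
  fixes \<rho>s :: "nat \<Rightarrow> ('x::polish_space \<times> 'y::polish_space) measure"
  assumes bps: "\<And>n. borel_prob (\<rho>s n)" and bp: "borel_prob \<rho>"
    and st: "\<And>E. E \<in> sets borel \<Longrightarrow> stab \<rho>s \<rho> (indicator E)"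
    and U: "open U"
  shows "lb \<rho>s \<rho> (indicator U)"
proof -
  obtain BX :: "'x set set" where BX: "countable BX" "topological_basis BX" using ex_countable_basis by blast
  obtain BY :: "'y set set" where BY: "countable BY" "topological_basis BY" using ex_countable_basis by blast
  define P where "P = {(a, b). a \<in> BX \<and> b \<in> BY \<and> a \<times> b \<subseteq> U}"
  have Pc: "countable P"
  proof (rule countable_subset)
    show "P \<subseteq> BX \<times> BY" unfolding P_def by auto
    show "countable (BX \<times> BY)" using BX BY by auto
  qed
  have PB: "p \<in> P \<Longrightarrow> open (fst p) \<and> open (snd p)" for p
    unfolding P_def using topological_basis_open[OF BX(2)] topological_basis_open[OF BY(2)] by auto
  have UP: "U = (\<Union>p\<in>P. fst p \<times> snd p)"
  proof
    show "(\<Union>p\<in>P. fst p \<times> snd p) \<subseteq> U" unfolding P_def by auto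
    show "U \<subseteq> (\<Union>p\<in>P. fst p \<times> snd p)"
    proof
      fix z assume z: "z \<in> U"
      obtain W where W: "W \<in> (\<lambda>(a, b). a \<times> b) ` (BX \<times> BY)" "z \<in> W" "W \<subseteq> U"
        using topological_basisE[OF topological_basis_prod[OF BX(2) BY(2)] U z] by blast
      then obtain a b where ab: "a \<in> BX" "b \<in> BY" "W = a \<times> b" by auto
      then have "(a, b) \<in> P" using W unfolding P_def by auto
      moreover have "z \<in> fst (a, b) \<times> snd (a, b)" using W ab by simp
      ultimately show "z \<in> (\<Union>p\<in>P. fst p \<times> snd p)" by blast
    qed
  qed
  show ?thesis
  proof (cases "P = {}")
    case True
    then have "indicator U = (\<lambda>z. 0::real)" using UP by auto
    then show ?thesis using lb_zero by simp
  next
    case False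
    define p where "p = from_nat_into P"
    have pP: "p i \<in> P" for i using from_nat_into[OF False] p_def by simp
    have rp: "range p = P" using range_from_nat_into[OF False Pc] p_def by simp
    define V where "V i = fst (p i)" for i
    define Q where "Q i = snd (p i)" for i
    have V: "open (V i)" and Q: "open (Q i)" for i using PB[OF pP[of i]] V_def Q_def by auto
    define W where "W N = (\<Union>i<N. V i \<times> Q i)" for N
    have Wo: "open (W N)" for N unfolding W_def using V Q by (auto intro: open_Times)
    have WU: "W N \<subseteq> U" for N
      unfolding W_def V_def Q_def using UP pP by blast
    have inc: "incseq W" unfolding W_def by (intro monoI) (force simp: lessThan_def)
    have UW: "(\<Union>N. W N) = U"
    proof -
      have "(\<Union>N. W N) = (\<Union>i. V i \<times> Q i)" unfolding W_def by auto
      also have "\<dots> = (\<Union>q\<in>range p. fst q \<times> snd q)" unfolding V_def Q_def by auto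
      finally show ?thesis using rp UP by simp
    qed
    interpret fm: prob_space \<rho> using bp_facts(1)[OF bp] .
    have lim: "(\<lambda>N. measure \<rho> (W N)) \<longlonglongrightarrow> measure \<rho> U"
    proof -
      have "range W \<subseteq> sets \<rho>" using Wo bp_facts(2)[OF bp] by auto
      then show ?thesis using fm.finite_Lim_measure_incseq[of W] inc UW by simp
    qed
    have Ui: "integrable N (indicator U :: _ \<Rightarrow> real)" if "borel_prob N" for N
      using U by (intro bp_int[OF that, where K=1]) (auto split: split_indicator)
    show ?thesis
      unfolding lb_def
    proof (intro conjI allI impI)
      show "integrable (\<rho>s n) (indicator U :: _ \<Rightarrow> real)" for n using Ui[OF bps[of n]] .
      show "integrable \<rho> (indicator U :: _ \<Rightarrow> real)" using Ui[OF bp] .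
      fix e :: real assume e: "e > 0"
      obtain N where N: "dist (measure \<rho> (W N)) (measure \<rho> U) < e/2"
        using lim[unfolded tendsto_iff, rule_format, of "e/2"] e by (auto simp: eventually_sequentially)
      have "lb \<rho>s \<rho> (indicator (W N))" unfolding W_def by (rule lb_union[OF bps bp st V Q])
      then have "eventually (\<lambda>n. (\<integral>z. indicator (W N) z \<partial>\<rho>s n) > (\<integral>z. indicator (W N) z \<partial>\<rho>) - e/2) sequentially"
        using e unfolding lb_def by simp
      then show "eventually (\<lambda>n. (\<integral>z. indicator U z \<partial>\<rho>s n) > (\<integral>z. indicator U z \<partial>\<rho>) - e) sequentially"
      proof eventually_elim
        case (elim n)
        interpret fn: prob_space "\<rho>s n" using bp_facts(1)[OF bps[of n]] .
        have "measure (\<rho>s n) (W N) \<le> measure (\<rho>s n) U"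
          using WU U Wo bp_facts(2)[OF bps[of n]] by (intro fn.finite_measure_mono) auto
        then show ?case using elim N unfolding int_ind[OF bps[of n]] int_ind[OF bp] dist_real_def abs_less_iff
          by linarith
      qed
    qed
  qed
qed

lemma disc:
  fixes t k :: real
  assumes k: "k > 0" and t: "t \<ge> 0"
  shows "(\<Sum>j\<in>{1..L}. if real j / k < t then 1 / k else 0) \<le> t \<and>
         (real L / k < t \<longrightarrow> (\<Sum>j\<in>{1..L}. if real j / k < t then 1 / k else 0) = real L / k) \<and>
         (t \<le> real L / k \<longrightarrow> (\<Sum>j\<in>{1..L}. if real j / k < t then 1 / k else 0) \<ge> t - 1 / k)"
proof (induction L)
  case 0
  then show ?case using k t by simp
next
  case (Suc L)
  let ?S = "(\<Sum>j\<in>{1..L}. if real j / k < t then 1 / k else 0)"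
  have eq: "(\<Sum>j\<in>{1..Suc L}. if real j / k < t then 1 / k else 0) = ?S + (if real (Suc L) / k < t then 1 / k else 0)"
    by simp
  have a: "real (Suc L) / k = real L / k + 1 / k" by (simp add: add_divide_distrib)
  have kp: "1 / k > 0" using k by simp
  show ?case
  proof (cases "real (Suc L) / k < t")
    case True
    then have "real L / k < t" using a kp by linarith
    then have "?S = real L / k" using Suc by blast
    then show ?thesis unfolding eq using True a by simp
  next
    case False
    then have eq2: "(\<Sum>j\<in>{1..Suc L}. if real j / k < t then 1 / k else 0) = ?S" unfolding eq by simp
    show ?thesis unfolding eq2
    proof (cases "real L / k < t")
      case True
      then have "?S = real L / k" using Suc by blast
      then show "?S \<le> t \<and> (real (Suc L) / k < t \<longrightarrow> ?S = real (Suc L) / k) \<and> (t \<le> real (Suc L) / k \<longrightarrow> t - 1 / k \<le> ?S)"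
        using False True a by auto
    next
      case F2: False
      then show "?S \<le> t \<and> (real (Suc L) / k < t \<longrightarrow> ?S = real (Suc L) / k) \<and> (t \<le> real (Suc L) / k \<longrightarrow> t - 1 / k \<le> ?S)"
        using False Suc by auto
    qed
  qed
qed

lemma bounded_abs2: "bounded (range (u::'a \<Rightarrow> real)) \<Longrightarrow> \<exists>K>0. \<forall>y. \<bar>u y\<bar> \<le> K"
  unfolding bounded_pos by auto

lemma lb_cont:
  fixes \<rho>s :: "nat \<Rightarrow> ('x::polish_space \<times> 'y::polish_space) measure" and h :: "'x \<times> 'y \<Rightarrow> real"
  assumes bps: "\<And>n. borel_prob (\<rho>s n)" and bp: "borel_prob \<rho>"
    and st: "\<And>E. E \<in> sets borel \<Longrightarrow> stab \<rho>s \<rho> (indicator E)"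
    and hc: "continuous_on UNIV h" and h0: "\<And>z. 0 \<le> h z" and hB: "\<And>z. h z \<le> B"
  shows "lb \<rho>s \<rho> h"
proof -
  have hm: "h \<in> borel_measurable borel" using hc by (rule borel_measurable_continuous_onI)
  have hi: "integrable N h" if "borel_prob N" for N
  proof (rule bp_int[OF that hm, where K=B])
    fix z show "\<bar>h z\<bar> \<le> B" using h0[of z] hB[of z] by simp
  qed
  show ?thesis
    unfolding lb_def
  proof (intro conjI allI impI)
    show "integrable (\<rho>s n) h" for n using hi[OF bps[of n]] .
    show "integrable \<rho> h" using hi[OF bp] .
    fix e :: real assume e: "e > 0"
    obtain k :: nat where k: "k > 0" "inverse (real k) < e/2"
      using ex_inverse_of_nat_less[of "e/2"] e by auto
    define kk where "kk = real k"
    have kk: "kk > 0" "1 / kk < e/2" using k kk_def by (auto simp: field_simps)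
    define L where "L = nat \<lceil>B * kk\<rceil>"
    have L: "B \<le> real L / kk"
    proof -
      have "B * kk \<le> real L" unfolding L_def by (rule real_nat_ceiling_ge)
      then show ?thesis using kk by (simp add: field_simps)
    qed
    define s where "s z = (\<Sum>j\<in>{1..L}. (1 / kk) * indicator {z. real j / kk < h z} z)" for z
    have s_eq: "s z = (\<Sum>j\<in>{1..L}. if real j / kk < h z then 1 / kk else 0)" for z
      unfolding s_def by (intro sum.cong) (auto simp: indicator_def)
    have sb: "s z \<le> h z" "h z - 1 / kk \<le> s z" for z
      using disc[OF kk(1) h0[of z], of L] L hB[of z] unfolding s_eq by auto
    have op: "open {z. real j / kk < h z}" for j
      by (rule open_Collect_less[OF continuous_on_const hc])
    have lbs: "lb \<rho>s \<rho> (\<lambda>z. \<Sum>j\<in>{1..L}. (1 / kk) * indicator {z. real j / kk < h z} z)"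
      using kk by (intro lb_sum lb_cmult lb_open[OF bps bp st op]) auto
    then have lbs': "lb \<rho>s \<rho> s" unfolding s_def[abs_def] .
    have si: "integrable (\<rho>s n) s" "integrable \<rho> s" for n using lbs' unfolding lb_def by auto
    have ev: "eventually (\<lambda>n. (\<integral>z. s z \<partial>\<rho>s n) > (\<integral>z. s z \<partial>\<rho>) - e/2) sequentially"
      using lbs' e unfolding lb_def by simp
    have low: "(\<integral>z. s z \<partial>\<rho>) \<ge> (\<integral>z. h z \<partial>\<rho>) - 1 / kk"
    proof -
      have ci: "integrable \<rho> (\<lambda>z. 1 / kk)" by (rule bp_int[OF bp, where K="1/kk"]) (use kk in auto)
      have "(\<integral>z. h z - 1 / kk \<partial>\<rho>) \<le> (\<integral>z. s z \<partial>\<rho>)"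
        using Bochner_Integration.integrable_diff[OF hi[OF bp] ci] si(2) sb(2) by (intro integral_mono) auto
      moreover have "(\<integral>z. h z - 1 / kk \<partial>\<rho>) = (\<integral>z. h z \<partial>\<rho>) - 1 / kk"
        by (subst Bochner_Integration.integral_diff[OF hi[OF bp] ci]) (simp add: bp_meas1[OF bp] bp_facts(3)[OF bp])
      ultimately show ?thesis by simp
    qed
    show "eventually (\<lambda>n. (\<integral>z. h z \<partial>\<rho>s n) > (\<integral>z. h z \<partial>\<rho>) - e) sequentially"
      using ev
    proof eventually_elim
      case (elim n)
      have "(\<integral>z. s z \<partial>\<rho>s n) \<le> (\<integral>z. h z \<partial>\<rho>s n)"
        using si(1)[of n] hi[OF bps[of n]] sb(1) by (intro integral_mono) auto
      then show ?case using elim low kk(2) by linarith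
    qed
  qed
qed

lemma fin:
  fixes \<rho>s :: "nat \<Rightarrow> ('x::polish_space \<times> 'y::polish_space) measure"
  assumes bps: "\<And>n. borel_prob (\<rho>s n)" and bp: "borel_prob \<rho>"
    and st: "\<And>E. E \<in> sets borel \<Longrightarrow> stab \<rho>s \<rho> (indicator E)"
  shows "weak_star_conv \<rho>s \<rho>"
  unfolding weak_star_conv_def
proof (intro allI impI)
  fix f :: "'x \<times> 'y \<Rightarrow> real" assume f: "continuous_on UNIV f \<and> bounded (range f)"
  have fc: "continuous_on UNIV f" using f by (rule conjunct1)
  obtain K where K: "K > 0" "\<And>z. \<bar>f z\<bar> \<le> K" using bounded_abs2[OF conjunct2[OF f]] by auto
  have fm: "f \<in> borel_measurable borel" using fc by (rule borel_measurable_continuous_onI)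
  have fi: "integrable N f" if "borel_prob N" for N using bp_int[OF that fm K(2)] .
  have ci: "integrable N (\<lambda>z. K)" if "borel_prob N" for N
    by (rule bp_int[OF that borel_measurable_const]) (rule order_refl)
  have fb: "- K \<le> f z" "f z \<le> K" for z using K(2)[of z] by (simp_all add: abs_le_iff)
  have l1: "lb \<rho>s \<rho> (\<lambda>z. f z + K)"
  proof (rule lb_cont[OF bps bp st, where B="2*K"])
    show "continuous_on UNIV (\<lambda>z. f z + K)" using fc by (intro continuous_on_add continuous_on_const)
    show "0 \<le> f z + K" for z using fb[of z] by linarith
    show "f z + K \<le> 2 * K" for z using fb[of z] by linarith
  qed
  have l2: "lb \<rho>s \<rho> (\<lambda>z. K - f z)"
  proof (rule lb_cont[OF bps bp st, where B="2*K"])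
    show "continuous_on UNIV (\<lambda>z. K - f z)" using fc by (intro continuous_on_diff continuous_on_const)
    show "0 \<le> K - f z" for z using fb[of z] by linarith
    show "K - f z \<le> 2 * K" for z using fb[of z] by linarith
  qed
  have i1: "(\<integral>z. f z + K \<partial>N) = (\<integral>z. f z \<partial>N) + K" if "borel_prob N" for N
    using fi[OF that] ci[OF that] int_const_bp[OF that, of K] by simp
  have i2: "(\<integral>z. K - f z \<partial>N) = K - (\<integral>z. f z \<partial>N)" if "borel_prob N" for N
    using fi[OF that] ci[OF that] int_const_bp[OF that, of K] by simp
  show "(\<lambda>n. \<integral>z. f z \<partial>\<rho>s n) \<longlonglongrightarrow> (\<integral>z. f z \<partial>\<rho>)"
    unfolding tendsto_iff
  proof (intro allI impI)
    fix e :: real assume e: "e > 0"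
    have "eventually (\<lambda>n. (\<integral>z. f z + K \<partial>\<rho>s n) > (\<integral>z. f z + K \<partial>\<rho>) - e) sequentially"
      "eventually (\<lambda>n. (\<integral>z. K - f z \<partial>\<rho>s n) > (\<integral>z. K - f z \<partial>\<rho>) - e) sequentially"
      using l1 l2 e unfolding lb_def by auto
    then show "eventually (\<lambda>n. dist (\<integral>z. f z \<partial>\<rho>s n) (\<integral>z. f z \<partial>\<rho>) < e) sequentially"
    proof eventually_elim
      case (elim n)
      then show ?case unfolding i1[OF bps[of n]] i1[OF bp] i2[OF bps[of n]] i2[OF bp] dist_real_def abs_less_iff
        by linarith
    qed
  qed
qed

lemma int_open_lim:
  fixes P :: "'a::polish_space measure"
  assumes bp: "borel_prob P" and U: "open U"
    and g: "\<And>k. continuous_on UNIV (g k)" "\<And>k x. 0 \<le> g k x \<and> g k x \<le> indicator U x"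
      "\<And>x. (\<lambda>k. g k x) \<longlonglongrightarrow> indicator U x"
  shows "(\<lambda>k. \<integral>x. g k x \<partial>P) \<longlonglongrightarrow> measure P U"
proof -
  have "(\<lambda>k. \<integral>x. g k x \<partial>P) \<longlonglongrightarrow> (\<integral>x. indicator U x \<partial>P)"
  proof (rule integral_dominated_convergence[where w="\<lambda>x. 1"])
    show "(indicator U :: _ \<Rightarrow> real) \<in> borel_measurable P" using U by (intro bp_meas[OF bp]) auto
    show "g k \<in> borel_measurable P" for k using g(1) by (intro bp_meas[OF bp] borel_measurable_continuous_onI)
    show "integrable P (\<lambda>x. 1::real)" by (rule bp_int[OF bp, where K=1]) auto
    show "AE x in P. (\<lambda>k. g k x) \<longlonglongrightarrow> indicator U x" using g(3) by simp
    show "AE x in P. norm (g k x) \<le> 1" for k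
    proof (intro AE_I2)
      fix x
      have "indicator U x \<le> (1::real)" by (simp split: split_indicator)
      then have "g k x \<le> 1" using g(2)[of k x] by linarith
      then show "norm (g k x) \<le> 1" using g(2)[of k x] by simp
    qed
  qed
  then show ?thesis using int_ind[OF bp] by simp
qed

lemma uniq:
  fixes P1 P2 :: "'a::polish_space measure"
  assumes b1: "borel_prob P1" and b2: "borel_prob P2"
    and eq: "\<And>u::'a \<Rightarrow> real. continuous_on UNIV u \<Longrightarrow> bounded (range u) \<Longrightarrow> (\<integral>x. u x \<partial>P1) = (\<integral>x. u x \<partial>P2)"
  shows "P1 = P2"
proof -
  interpret p1: prob_space P1 using bp_facts(1)[OF b1] .
  interpret p2: prob_space P2 using bp_facts(1)[OF b2] .
  have opn: "measure P1 U = measure P2 U" if U: "open U" for U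
  proof -
    obtain g :: "nat \<Rightarrow> 'a \<Rightarrow> real" where g: "\<And>k. continuous_on UNIV (g k)"
      "\<And>k x. 0 \<le> g k x \<and> g k x \<le> indicator U x" "\<And>x. (\<lambda>k. g k x) \<longlonglongrightarrow> indicator U x"
      using open_approx[OF U] by blast
    have gb: "bounded (range (g k))" for k
    proof (intro boundedI[where B=1])
      fix y assume "y \<in> range (g k)"
      then obtain x where "y = g k x" by auto
      moreover have "indicator U x \<le> (1::real)" by (simp split: split_indicator)
      then have "g k x \<le> 1" using g(2)[of k x] by linarith
      ultimately show "norm y \<le> 1" using g(2)[of k x] by simp
    qed
    have l1: "(\<lambda>k. \<integral>x. g k x \<partial>P1) \<longlonglongrightarrow> measure P1 U" by (rule int_open_lim[OF b1 U g])
    have l2: "(\<lambda>k. \<integral>x. g k x \<partial>P1) \<longlonglongrightarrow> measure P2 U"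
      using int_open_lim[OF b2 U g] eq[OF g(1) gb] by simp
    show ?thesis using LIMSEQ_unique[OF l1 l2] .
  qed
  show ?thesis
  proof (rule measure_eqI_generator_eq[where E="{S. open S}" and \<Omega>=UNIV and A="\<lambda>i. UNIV"])
    show "Int_stable {S::'a set. open S}" by (auto simp: Int_stable_def)
    show "{S::'a set. open S} \<subseteq> Pow UNIV" by auto
    show "emeasure P1 X = emeasure P2 X" if "X \<in> {S. open S}" for X
      using opn[of X] that by (simp add: p1.emeasure_eq_measure p2.emeasure_eq_measure)
    show "sets P1 = sigma_sets UNIV {S. open S}" using bp_facts(2)[OF b1] by (simp add: sets_borel)
    show "sets P2 = sigma_sets UNIV {S. open S}" using bp_facts(2)[OF b2] by (simp add: sets_borel)
    show "range (\<lambda>i. UNIV) \<subseteq> {S::'a set. open S}" by auto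
    show "(\<Union>i::nat. UNIV) = (UNIV :: 'a set)" by simp
    show "emeasure P1 UNIV \<noteq> \<infinity>" for i :: nat by simp
  qed
qed

lemma marg_bp:
  fixes N :: "('a::polish_space \<times> 'b::polish_space) measure"
  assumes "borel_prob N" shows "borel_prob (marg1 N)"
  unfolding borel_prob_def marg1_def
  using prob_space.prob_space_distr[OF bp_facts(1)[OF assms] bp_meas[OF assms fst_meas]] by simp

lemma rect_borel:
  assumes "A \<in> sets borel" "B \<in> sets borel"
  shows "A \<times> B \<in> sets (borel :: ('x::second_countable_topology \<times> 'y::second_countable_topology) measure)"
proof -
  have "A \<times> B \<in> sets (borel \<Otimes>\<^sub>M borel :: ('x \<times> 'y) measure)" using assms by simp
  then show ?thesis by (metis borel_prod)
qed

lemma disint: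
  fixes \<kappa> :: "'a::polish_space \<Rightarrow> 'b::polish_space measure" and \<nu> :: "('a \<times> 'c::polish_space) measure"
    and \<phi> :: "('a \<times> 'b \<times> 'c) measure" and u :: "'c \<Rightarrow> real"
  assumes b\<nu>: "borel_prob \<nu>" and gl: "is_glue \<kappa> \<nu> \<phi>" and kp: "\<And>a. borel_prob (\<kappa> a)"
    and km: "\<And>B. B \<in> sets borel \<Longrightarrow> (\<lambda>a. measure (\<kappa> a) B) \<in> borel_measurable borel"
    and A0: "A0 \<in> sets borel" and B0: "B0 \<in> sets borel"
    and um: "u \<in> borel_measurable borel" and ub: "\<And>c. \<bar>u c\<bar> \<le> K"
  shows "(\<integral>w. indicator A0 (fst w) * indicator B0 (fst (snd w)) * u (snd (snd w)) \<partial>\<phi>) =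
         (\<integral>x. indicator A0 (fst x) * measure (\<kappa> (fst x)) B0 * u (snd x) \<partial>\<nu>)"
proof -
  have b\<phi>: "borel_prob \<phi>" using gl unfolding is_glue_def by simp
  interpret p\<phi>: prob_space \<phi> using bp_facts(1)[OF b\<phi>] .
  interpret p\<nu>: prob_space \<nu> using bp_facts(1)[OF b\<nu>] .
  define d1 where "d1 w = (indicator (A0 \<times> B0 \<times> UNIV) w :: real)" for w :: "'a \<times> 'b \<times> 'c"
  define d2 where "d2 x = indicator A0 (fst x) * measure (\<kappa> (fst x)) B0" for x :: "'a \<times> 'c"
  have ss: "(\<lambda>w::'a \<times> 'b \<times> 'c. snd (snd w)) \<in> measurable borel borel"
    by (intro borel_measurable_continuous_onI continuous_intros)
  have ssm: "(\<lambda>w. snd (snd w)) \<in> measurable \<phi> borel" by (rule bp_meas[OF b\<phi> ss])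
  have sm: "snd \<in> measurable \<nu> borel" by (rule bp_meas[OF b\<nu> snd_meas])
  have ABU: "A0 \<times> B0 \<times> UNIV \<in> sets (borel :: ('a \<times> 'b \<times> 'c) measure)"
    using A0 B0 by (intro rect_borel) auto
  have d1m: "d1 \<in> borel_measurable \<phi>" unfolding d1_def using ABU bp_facts(2)[OF b\<phi>] by simp
  have kmB: "(\<lambda>a. measure (\<kappa> a) B0) \<in> borel_measurable borel" using km[OF B0] .
  have d2mb: "d2 \<in> borel_measurable borel"
    unfolding d2_def using A0 kmB
    by (intro borel_measurable_times comp_fst) auto
  have d2m: "d2 \<in> borel_measurable \<nu>" by (rule bp_meas[OF b\<nu> d2mb])
  have kb: "0 \<le> measure (\<kappa> a) B0 \<and> measure (\<kappa> a) B0 \<le> 1" for a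
    using prob_space.prob_le_1[OF bp_facts(1)[OF kp[of a]]] by simp
  have d2b: "0 \<le> d2 x \<and> d2 x \<le> 1" for x
    unfolding d2_def using kb[of "fst x"] by (auto split: split_indicator)
  define P1 where "P1 = distr (density \<phi> (\<lambda>w. ennreal (d1 w))) borel (\<lambda>w. snd (snd w))"
  define P2 where "P2 = distr (density \<nu> (\<lambda>x. ennreal (d2 x))) borel snd"
  have P12: "P1 = P2"
  proof (rule measure_eqI)
    show "sets P1 = sets P2" unfolding P1_def P2_def by simp
    fix C0 assume "C0 \<in> sets P1"
    then have C0: "C0 \<in> sets borel" unfolding P1_def by simp
    have ABC: "A0 \<times> B0 \<times> C0 \<in> sets (borel :: ('a \<times> 'b \<times> 'c) measure)"
      using A0 B0 C0 by (intro rect_borel) auto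
    have AC: "A0 \<times> C0 \<in> sets (borel :: ('a \<times> 'c) measure)"
      using A0 C0 by (intro rect_borel) auto
    have "emeasure P1 C0 = emeasure (density \<phi> (\<lambda>w. ennreal (d1 w))) ((\<lambda>w. snd (snd w)) -` C0)"
      unfolding P1_def using ssm C0 bp_facts(3)[OF b\<phi>] by (subst emeasure_distr) auto
    also have "\<dots> = (\<integral>\<^sup>+ w. ennreal (d1 w) * indicator ((\<lambda>w. snd (snd w)) -` C0) w \<partial>\<phi>)"
      using d1m measurable_sets[OF ssm C0] bp_facts(3)[OF b\<phi>] by (subst emeasure_density) auto
    also have "\<dots> = (\<integral>\<^sup>+ w. indicator (A0 \<times> B0 \<times> C0) w \<partial>\<phi>)"
      by (intro nn_integral_cong) (auto simp: d1_def split: split_indicator)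
    also have "\<dots> = emeasure \<phi> (A0 \<times> B0 \<times> C0)"
      using ABC bp_facts(2)[OF b\<phi>] by simp
    also have "\<dots> = ennreal (measure \<phi> (A0 \<times> B0 \<times> C0))" by (simp add: p\<phi>.emeasure_eq_measure)
    also have "measure \<phi> (A0 \<times> B0 \<times> C0) = (\<integral>x\<in>A0 \<times> C0. measure (\<kappa> (fst x)) B0 \<partial>\<nu>)"
      using gl A0 B0 C0 unfolding is_glue_def by blast
    also have "\<dots> = (\<integral>x. indicator (A0 \<times> C0) x * measure (\<kappa> (fst x)) B0 \<partial>\<nu>)"
      by (simp add: set_lebesgue_integral_def)
    also have "ennreal \<dots> = (\<integral>\<^sup>+ x. ennreal (indicator (A0 \<times> C0) x * measure (\<kappa> (fst x)) B0) \<partial>\<nu>)"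
    proof (rule nn_integral_eq_integral[symmetric])
      have "(\<lambda>x. indicator (A0 \<times> C0) x * measure (\<kappa> (fst x)) B0) \<in> borel_measurable (borel :: ('a \<times> 'c) measure)"
        using AC kmB by (intro borel_measurable_times comp_fst) auto
      then show "integrable \<nu> (\<lambda>x. indicator (A0 \<times> C0) x * measure (\<kappa> (fst x)) B0)"
        by (rule bp_int[OF b\<nu>, where K=1]) (use kb in \<open>auto split: split_indicator\<close>)
      show "AE x in \<nu>. 0 \<le> indicator (A0 \<times> C0) x * measure (\<kappa> (fst x)) B0"
        using kb by (auto split: split_indicator)
    qed
    also have "\<dots> = (\<integral>\<^sup>+ x. ennreal (d2 x) * indicator (snd -` C0) x \<partial>\<nu>)"
      by (intro nn_integral_cong) (auto simp: d2_def split: split_indicator)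
    also have "\<dots> = emeasure (density \<nu> (\<lambda>x. ennreal (d2 x))) (snd -` C0)"
      using d2m measurable_sets[OF sm C0] bp_facts(3)[OF b\<nu>] by (subst emeasure_density) auto
    also have "\<dots> = emeasure P2 C0"
      unfolding P2_def using sm C0 bp_facts(3)[OF b\<nu>] by (subst emeasure_distr) auto
    finally show "emeasure P1 C0 = emeasure P2 C0" .
  qed
  have "(\<integral>c. u c \<partial>P1) = (\<integral>w. u (snd (snd w)) \<partial>density \<phi> (\<lambda>w. ennreal (d1 w)))"
    unfolding P1_def using um ssm by (subst integral_distr) auto
  also have "\<dots> = (\<integral>w. d1 w *\<^sub>R u (snd (snd w)) \<partial>\<phi>)"
  proof (rule integral_density)
    show "(\<lambda>w. u (snd (snd w))) \<in> borel_measurable \<phi>" using um ssm by measurable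
    show "d1 \<in> borel_measurable \<phi>" by (rule d1m)
    show "AE x in \<phi>. 0 \<le> d1 x" by (auto simp: d1_def)
  qed
  finally have I1: "(\<integral>c. u c \<partial>P1) = (\<integral>w. d1 w * u (snd (snd w)) \<partial>\<phi>)" by simp
  have "(\<integral>c. u c \<partial>P2) = (\<integral>x. u (snd x) \<partial>density \<nu> (\<lambda>x. ennreal (d2 x)))"
    unfolding P2_def using um sm by (subst integral_distr) auto
  also have "\<dots> = (\<integral>x. d2 x *\<^sub>R u (snd x) \<partial>\<nu>)"
  proof (rule integral_density)
    show "(\<lambda>x. u (snd x)) \<in> borel_measurable \<nu>" using um sm by measurable
    show "d2 \<in> borel_measurable \<nu>" by (rule d2m)
    show "AE x in \<nu>. 0 \<le> d2 x" using d2b by auto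
  qed
  finally have I2: "(\<integral>c. u c \<partial>P2) = (\<integral>x. d2 x * u (snd x) \<partial>\<nu>)" by simp
  note I1 I2
  moreover have "(\<lambda>w. d1 w * u (snd (snd w))) = (\<lambda>w. indicator A0 (fst w) * indicator B0 (fst (snd w)) * u (snd (snd w)))"
    by (intro ext) (auto simp: d1_def split: split_indicator)
  ultimately show ?thesis using P12 unfolding d2_def by simp
qed

definition reas :: "'a \<times> 'b \<times> 'c \<Rightarrow> ('a \<times> 'b) \<times> 'c" where
  "reas w = ((fst w, fst (snd w)), snd (snd w))"

lemma reas_meas: "reas \<in> measurable (borel :: ('a::polish_space \<times> 'b::polish_space \<times> 'c::polish_space) measure) borel"
  unfolding reas_def[abs_def] by (intro borel_measurable_continuous_onI continuous_intros)

lemma bp_distr: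
  fixes f :: "'a::topological_space \<Rightarrow> 'b::topological_space"
  assumes "borel_prob N" "f \<in> measurable borel borel"
  shows "borel_prob (distr N borel f)"
  unfolding borel_prob_def
  using prob_space.prob_space_distr[OF bp_facts(1)[OF assms(1)] bp_meas[OF assms]] by simp

lemma disint_r:
  fixes \<kappa> :: "'a::polish_space \<Rightarrow> 'b::polish_space measure" and N :: "('a \<times> 'c::polish_space) measure"
    and \<Phi> :: "('a \<times> 'b \<times> 'c) measure" and u :: "'c \<Rightarrow> real"
  assumes bN: "borel_prob N" and gl: "is_glue \<kappa> N \<Phi>" and kp: "\<And>a. borel_prob (\<kappa> a)"
    and km: "\<And>B. B \<in> sets borel \<Longrightarrow> (\<lambda>a. measure (\<kappa> a) B) \<in> borel_measurable borel"
    and A0: "A0 \<in> sets borel" and B0: "B0 \<in> sets borel"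
    and um: "u \<in> borel_measurable borel" and ub: "\<And>c. \<bar>u c\<bar> \<le> K"
  shows "(\<integral>z. indicator (A0 \<times> B0) (fst z) * u (snd z) \<partial>distr \<Phi> borel reas) =
         (\<integral>x. indicator A0 (fst x) * measure (\<kappa> (fst x)) B0 * u (snd x) \<partial>N)"
proof -
  have b\<Phi>: "borel_prob \<Phi>" using gl unfolding is_glue_def by simp
  have AB: "A0 \<times> B0 \<in> sets (borel :: ('a \<times> 'b) measure)" using A0 B0 by (intro rect_borel) auto
  have im: "(\<lambda>z::('a \<times> 'b) \<times> 'c. indicator (A0 \<times> B0) (fst z) * u (snd z)) \<in> borel_measurable borel"
    using AB um by (intro borel_measurable_times comp_fst comp_snd) auto
  have "(\<integral>z. indicator (A0 \<times> B0) (fst z) * u (snd z) \<partial>distr \<Phi> borel reas) =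
        (\<integral>w. indicator (A0 \<times> B0) (fst (reas w)) * u (snd (reas w)) \<partial>\<Phi>)"
    by (rule integral_distr[OF bp_meas[OF b\<Phi> reas_meas] im])
  also have "\<dots> = (\<integral>w. indicator A0 (fst w) * indicator B0 (fst (snd w)) * u (snd (snd w)) \<partial>\<Phi>)"
    by (simp add: reas_def indicator_times)
  also have "\<dots> = (\<integral>x. indicator A0 (fst x) * measure (\<kappa> (fst x)) B0 * u (snd x) \<partial>N)"
    by (rule disint[OF bN gl kp km A0 B0 um ub])
  finally show ?thesis .
qed

lemma glue_marg:
  fixes \<kappa> :: "'a::polish_space \<Rightarrow> 'b::polish_space measure" and N :: "('a \<times> 'c::polish_space) measure"
    and \<Phi> :: "('a \<times> 'b \<times> 'c) measure" and \<mu> :: "('a \<times> 'b) measure"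
  assumes bN: "borel_prob N" and gl: "is_glue \<kappa> N \<Phi>" and b\<mu>: "borel_prob \<mu>"
    and rcd: "regular_cond_distr \<mu> \<kappa>" and mg: "marg1 N = marg1 \<mu>"
  shows "distr (distr \<Phi> borel reas) borel fst = \<mu>"
proof -
  have kp: "\<And>a. borel_prob (\<kappa> a)" and km: "\<And>B. B \<in> sets borel \<Longrightarrow> (\<lambda>a. measure (\<kappa> a) B) \<in> borel_measurable borel"
    and kr: "\<And>A B. A \<in> sets borel \<Longrightarrow> B \<in> sets borel \<Longrightarrow> measure \<mu> (A \<times> B) = (\<integral>a\<in>A. measure (\<kappa> a) B \<partial>marg1 \<mu>)"
    using rcd unfolding regular_cond_distr_def by auto
  have b\<Phi>: "borel_prob \<Phi>" using gl unfolding is_glue_def by simp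
  have b\<rho>: "borel_prob (distr \<Phi> borel reas)" by (rule bp_distr[OF b\<Phi> reas_meas])
  have bD: "borel_prob (distr (distr \<Phi> borel reas) borel fst)" by (rule bp_distr[OF b\<rho> fst_meas])
  interpret pD: prob_space "distr (distr \<Phi> borel reas) borel fst" using bp_facts(1)[OF bD] .
  interpret p\<mu>: prob_space \<mu> using bp_facts(1)[OF b\<mu>] .
  have val: "measure (distr (distr \<Phi> borel reas) borel fst) (A0 \<times> B0) = measure \<mu> (A0 \<times> B0)"
    if A0: "A0 \<in> sets borel" and B0: "B0 \<in> sets borel" for A0 B0
  proof -
    have AB: "A0 \<times> B0 \<in> sets (borel :: ('a \<times> 'b) measure)" using A0 B0 by (intro rect_borel) auto
    have "measure (distr (distr \<Phi> borel reas) borel fst) (A0 \<times> B0) = (\<integral>x. indicator (A0 \<times> B0) x \<partial>distr (distr \<Phi> borel reas) borel fst)"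
      using int_ind[OF bD] by simp
    also have "\<dots> = (\<integral>z. indicator (A0 \<times> B0) (fst z) * 1 \<partial>distr \<Phi> borel reas)"
      using AB by (subst integral_distr[OF bp_meas[OF b\<rho> fst_meas]]) auto
    also have "\<dots> = (\<integral>x. indicator A0 (fst x) * measure (\<kappa> (fst x)) B0 * 1 \<partial>N)"
      by (rule disint_r[OF bN gl kp km A0 B0, where K=1]) auto
    also have "\<dots> = (\<integral>a. indicator A0 a * measure (\<kappa> a) B0 \<partial>marg1 N)"
      unfolding marg1_def using A0 km[OF B0]
      by (subst integral_distr[OF bp_meas[OF bN fst_meas]]) (auto intro!: borel_measurable_times)
    also have "\<dots> = (\<integral>a\<in>A0. measure (\<kappa> a) B0 \<partial>marg1 \<mu>)"
      using mg by (simp add: set_lebesgue_integral_def)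
    also have "\<dots> = measure \<mu> (A0 \<times> B0)" using kr[OF A0 B0] by simp
    finally show ?thesis .
  qed
  let ?E = "{a \<times> b | a b. a \<in> sets (borel::'a measure) \<and> b \<in> sets (borel::'b measure)}"
  have sE: "sets (borel :: ('a \<times> 'b) measure) = sigma_sets UNIV ?E"
  proof -
    have "sets (borel :: ('a \<times> 'b) measure) = sets (borel \<Otimes>\<^sub>M borel :: ('a \<times> 'b) measure)"
      by (metis borel_prod)
    also have "\<dots> = sigma_sets (space borel \<times> space borel) ?E" by (rule sets_pair_measure)
    also have "space borel \<times> space borel = (UNIV :: ('a \<times> 'b) set)" by (simp only: space_borel UNIV_Times_UNIV)
    finally show ?thesis .
  qed
  show ?thesis
  proof (rule measure_eqI_generator_eq[where E="?E" and \<Omega>=UNIV and A="\<lambda>i. UNIV"])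
    show "Int_stable ?E"
      using Int_stable_pair_measure_generator[of "borel::'a measure" "borel::'b measure"] .
    show "?E \<subseteq> Pow UNIV" by auto
    show "emeasure (distr (distr \<Phi> borel reas) borel fst) X = emeasure \<mu> X" if "X \<in> ?E" for X
    proof -
      obtain a b where ab: "X = a \<times> b" "a \<in> sets borel" "b \<in> sets borel" using \<open>X \<in> ?E\<close> by blast
      show ?thesis unfolding pD.emeasure_eq_measure p\<mu>.emeasure_eq_measure ab(1) val[OF ab(2,3)] ..
    qed
    show "sets (distr (distr \<Phi> borel reas) borel fst) = sigma_sets UNIV ?E" unfolding sets_distr by (rule sE)
    show "sets \<mu> = sigma_sets UNIV ?E" unfolding bp_facts(2)[OF b\<mu>] by (rule sE)
    show "range (\<lambda>i. UNIV) \<subseteq> ?E"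
    proof -
      have "(UNIV :: ('a \<times> 'b) set) = UNIV \<times> UNIV" by simp
      moreover have "(UNIV :: 'a set) \<in> sets borel" "(UNIV :: 'b set) \<in> sets borel" by simp_all
      ultimately have "(UNIV :: ('a \<times> 'b) set) \<in> ?E" by blast
      then show ?thesis by blast
    qed
    show "(\<Union>i::nat. UNIV) = (UNIV :: ('a \<times> 'b) set)" by simp
    show "emeasure (distr (distr \<Phi> borel reas) borel fst) UNIV \<noteq> \<infinity>" for i :: nat by simp
  qed
qed

instance prod :: (polish_space, polish_space) polish_space ..

theorem corollary4:
  fixes \<mu> :: "('a::polish_space \<times> 'b::polish_space) measure"
    and \<nu>s :: "nat \<Rightarrow> ('a \<times> 'c::polish_space) measure"
    and \<nu> :: "('a \<times> 'c) measure"
    and \<kappa> :: "'a \<Rightarrow> 'b measure"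
    and \<phi>s :: "nat \<Rightarrow> ('a \<times> 'b \<times> 'c) measure"
    and \<phi> :: "('a \<times> 'b \<times> 'c) measure"
  assumes "borel_prob \<mu>"
    and "\<And>n. borel_prob (\<nu>s n)"
    and "borel_prob \<nu>"
    and "\<And>n. marg1 (\<nu>s n) = marg1 \<mu>"
    and "weak_star_conv \<nu>s \<nu>"
    and "regular_cond_distr \<mu> \<kappa>"
    and "\<And>n. is_glue \<kappa> (\<nu>s n) (\<phi>s n)"
    and "is_glue \<kappa> \<nu> \<phi>"
  shows "weak_star_conv \<phi>s \<phi>"
proof -
  note b\<mu> = assms(1) and b\<nu>s = assms(2) and b\<nu> = assms(3) and mg = assms(4) and wc = assms(5)
    and rcd = assms(6) and gls = assms(7) and gl = assms(8)
  have kp: "\<And>a. borel_prob (\<kappa> a)" and km: "\<And>B. B \<in> sets borel \<Longrightarrow> (\<lambda>a. measure (\<kappa> a) B) \<in> borel_measurable borel"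
    using rcd unfolding regular_cond_distr_def by auto
  have b\<phi>s: "borel_prob (\<phi>s n)" for n using gls[of n] unfolding is_glue_def by simp
  have b\<phi>: "borel_prob \<phi>" using gl unfolding is_glue_def by simp
  define m where "m = marg1 \<mu>"
  have mgn: "marg1 \<nu> = m"
    unfolding m_def
  proof (rule uniq[OF marg_bp[OF b\<nu>] marg_bp[OF b\<mu>]])
    fix u :: "'a \<Rightarrow> real" assume uc: "continuous_on UNIV u" and ub: "bounded (range u)"
    have um: "u \<in> borel_measurable borel" using uc by (rule borel_measurable_continuous_onI)
    have I: "(\<integral>x. u x \<partial>marg1 N) = (\<integral>z. u (fst z) \<partial>N)" if "borel_prob N" for N :: "('a \<times> 'c) measure"
      unfolding marg1_def by (rule integral_distr[OF bp_meas[OF that fst_meas] um])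
    have c: "continuous_on UNIV (\<lambda>z::'a \<times> 'c. u (fst z))"
      by (rule continuous_on_compose2[OF uc continuous_on_fst[OF continuous_on_id]]) auto
    have b: "bounded (range (\<lambda>z::'a \<times> 'c. u (fst z)))"
      using ub by (rule bounded_subset) auto
    have "(\<lambda>n. \<integral>z. u (fst z) \<partial>\<nu>s n) \<longlonglongrightarrow> (\<integral>z. u (fst z) \<partial>\<nu>)"
      using wc[unfolded weak_star_conv_def, rule_format, OF conjI[OF c b]] .
    moreover have "(\<integral>z. u (fst z) \<partial>\<nu>s n) = (\<integral>x. u x \<partial>marg1 \<mu>)" for n
      using I[OF b\<nu>s[of n]] mg[of n] by simp
    ultimately have "(\<lambda>n. \<integral>x. u x \<partial>marg1 \<mu>) \<longlonglongrightarrow> (\<integral>z. u (fst z) \<partial>\<nu>)" by simp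
    then have "(\<integral>x. u x \<partial>marg1 \<mu>) = (\<integral>z. u (fst z) \<partial>\<nu>)" using LIMSEQ_unique[OF tendsto_const] by blast
    then show "(\<integral>x. u x \<partial>marg1 \<nu>) = (\<integral>x. u x \<partial>marg1 \<mu>)" using I[OF b\<nu>] by simp
  qed
  \<comment> \<open>Step 2: stable convergence on the first factor\<close>
  interpret A: fixm \<nu>s \<nu> m
    using b\<nu>s b\<nu> mg mgn unfolding m_def marg1_def by unfold_locales auto
  have stA: "stab \<nu>s \<nu> (indicator E)" if "E \<in> sets borel" for E
  proof (rule A.stab_sets[where G="{S. open S}"])
    show "Int_stable {S::'a set. open S}" by (auto simp: Int_stable_def)
    show "sets (borel::'a measure) = sigma_sets UNIV {S. open S}" by (simp add: sets_borel)
    show "UNIV \<in> {S::'a set. open S}" by simp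
    show "stab \<nu>s \<nu> (indicator E)" if "E \<in> {S. open S}" for E using A.stab_open[OF wc] that by simp
  qed (rule that)
  define \<rho>s where "\<rho>s n = distr (\<phi>s n) borel reas" for n
  define \<rho> where "\<rho> = distr \<phi> borel reas"
  have b\<rho>s: "borel_prob (\<rho>s n)" for n unfolding \<rho>s_def by (rule bp_distr[OF b\<phi>s reas_meas])
  have b\<rho>: "borel_prob \<rho>" unfolding \<rho>_def by (rule bp_distr[OF b\<phi> reas_meas])
  have m\<rho>s: "distr (\<rho>s n) borel fst = \<mu>" for n
    unfolding \<rho>s_def using glue_marg[OF b\<nu>s gls b\<mu> rcd mg] .
  have m\<rho>: "distr \<rho> borel fst = \<mu>"
    unfolding \<rho>_def using glue_marg[OF b\<nu> gl b\<mu> rcd] mgn unfolding m_def by blast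
  interpret B: fixm \<rho>s \<rho> \<mu>
    using b\<rho>s b\<rho> m\<rho>s m\<rho> by unfold_locales auto
  have stR: "stab \<rho>s \<rho> (indicator (A0 \<times> B0))" if A0: "A0 \<in> sets borel" and B0: "B0 \<in> sets borel" for A0 B0
    unfolding stab_def
  proof (intro allI impI)
    fix u :: "'c \<Rightarrow> real" assume u: "continuous_on UNIV u \<and> bounded (range u)"
    obtain K where K: "\<And>c. \<bar>u c\<bar> \<le> K" using bounded_abs2[OF conjunct2[OF u]] by auto
    have um: "u \<in> borel_measurable borel" using conjunct1[OF u] by (rule borel_measurable_continuous_onI)
    define g where "g a = indicator A0 a * measure (\<kappa> a) B0" for a
    have gm: "g \<in> borel_measurable borel" unfolding g_def using A0 km[OF B0] by (intro borel_measurable_times) auto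
    have gb: "\<bar>g a\<bar> \<le> 1" for a
    proof -
      have "0 \<le> measure (\<kappa> a) B0 \<and> measure (\<kappa> a) B0 \<le> 1"
        using prob_space.prob_le_1[OF bp_facts(1)[OF kp[of a]]] by simp
      then show ?thesis unfolding g_def by (auto split: split_indicator)
    qed
    have sg: "stab \<nu>s \<nu> g" by (rule A.stab_int[OF stA A.M_int[OF gm gb]])
    have e1: "(\<integral>z. indicator (A0 \<times> B0) (fst z) * u (snd z) \<partial>\<rho>s n) = (\<integral>x. g (fst x) * u (snd x) \<partial>\<nu>s n)" for n
      unfolding \<rho>s_def g_def by (rule disint_r[OF b\<nu>s gls kp km A0 B0 um K])
    have e2: "(\<integral>z. indicator (A0 \<times> B0) (fst z) * u (snd z) \<partial>\<rho>) = (\<integral>x. g (fst x) * u (snd x) \<partial>\<nu>)"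
      unfolding \<rho>_def g_def by (rule disint_r[OF b\<nu> gl kp km A0 B0 um K])
    show "(\<lambda>n. \<integral>z. indicator (A0 \<times> B0) (fst z) * u (snd z) \<partial>\<rho>s n) \<longlonglongrightarrow> (\<integral>z. indicator (A0 \<times> B0) (fst z) * u (snd z) \<partial>\<rho>)"
      unfolding e1 e2 using sg[unfolded stab_def, rule_format, OF u] .
  qed
  let ?E = "{a \<times> b | a b. a \<in> sets (borel::'a measure) \<and> b \<in> sets (borel::'b measure)}"
  have sE: "sets (borel :: ('a \<times> 'b) measure) = sigma_sets UNIV ?E"
  proof -
    have "sets (borel :: ('a \<times> 'b) measure) = sets (borel \<Otimes>\<^sub>M borel :: ('a \<times> 'b) measure)"
      by (metis borel_prod)
    also have "\<dots> = sigma_sets (space borel \<times> space borel) ?E" by (rule sets_pair_measure)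
    also have "space borel \<times> space borel = (UNIV :: ('a \<times> 'b) set)" by (simp only: space_borel UNIV_Times_UNIV)
    finally show ?thesis .
  qed
  have stB: "stab \<rho>s \<rho> (indicator E)" if "E \<in> sets borel" for E
  proof (rule B.stab_sets[where G="?E"])
    show "Int_stable ?E"
      using Int_stable_pair_measure_generator[of "borel::'a measure" "borel::'b measure"] .
    show "sets (borel::('a \<times> 'b) measure) = sigma_sets UNIV ?E" by (rule sE)
    show "UNIV \<in> ?E"
    proof -
      have "(UNIV :: ('a \<times> 'b) set) = UNIV \<times> UNIV" by simp
      moreover have "(UNIV :: 'a set) \<in> sets borel" "(UNIV :: 'b set) \<in> sets borel" by simp_all
      ultimately show ?thesis by blast
    qed
    show "stab \<rho>s \<rho> (indicator X)" if "X \<in> ?E" for X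
    proof -
      obtain a b where ab: "X = a \<times> b" "a \<in> sets borel" "b \<in> sets borel" using \<open>X \<in> ?E\<close> by blast
      show ?thesis unfolding ab(1) by (rule stR[OF ab(2,3)])
    qed
  qed (rule that)
  have wc\<rho>: "weak_star_conv \<rho>s \<rho>" by (rule fin[OF b\<rho>s b\<rho> stB])
  show ?thesis
    unfolding weak_star_conv_def
  proof (intro allI impI)
    fix f :: "'a \<times> 'b \<times> 'c \<Rightarrow> real" assume f: "continuous_on UNIV f \<and> bounded (range f)"
    define f' where "f' z = f (fst (fst z), snd (fst z), snd z)" for z :: "('a \<times> 'b) \<times> 'c"
    have fc: "continuous_on UNIV f'"
      unfolding f'_def[abs_def]
      by (rule continuous_on_compose2[OF conjunct1[OF f]]) (auto intro!: continuous_intros)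
    have fb: "bounded (range f')"
      using conjunct2[OF f] by (rule bounded_subset) (auto simp: f'_def)
    have fm: "f' \<in> borel_measurable borel" using fc by (rule borel_measurable_continuous_onI)
    have tr: "(\<integral>z. f' z \<partial>distr N borel reas) = (\<integral>w. f w \<partial>N)" if "borel_prob N" for N
      by (subst integral_distr[OF bp_meas[OF that reas_meas] fm]) (simp add: f'_def reas_def)
    have "(\<lambda>n. \<integral>z. f' z \<partial>\<rho>s n) \<longlonglongrightarrow> (\<integral>z. f' z \<partial>\<rho>)"
      using wc\<rho>[unfolded weak_star_conv_def, rule_format, OF conjI[OF fc fb]] .
    then show "(\<lambda>n. \<integral>w. f w \<partial>\<phi>s n) \<longlonglongrightarrow> (\<integral>w. f w \<partial>\<phi>)"
      unfolding \<rho>s_def \<rho>_def tr[OF b\<phi>s] tr[OF b\<phi>] .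
  qed
qed

end
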